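(* Let $A$ be an R$^*$-algebra and $v\in A$ a partial isometry. If $vv^*\le v^*v$, then $vv^*=v^*v$.
   Context: An R$^*$-algebra is a (not necessarily closed, not necessarily unital) $^*$-subalgebra $A$ of $B(H)$, $H$ a complex Hilbert space, such that every self-adjoint element of $A$ has finite spectrum. For projections, $p\le q$ means $pq=p$. *)

theory Defs
  imports "HOL-Analysis.Analysis"
begin

text \<open>The distribution has no complex Hilbert spaces, so we introduce them.
  Convention: the inner product is conjugate-linear in the first argument.\<close>

class complex_vector = real_vector +
  fixes scaleC :: "complex \<Rightarrow> 'a \<Rightarrow> 'a"
  assumes scaleC_add_right: "scaleC a (x + y) = scaleC a x + scaleC a y"
    and scaleC_add_left: "scaleC (a + b) x = scaleC a x + scaleC b x"
    and scaleC_scaleC: "scaleC a (scaleC b x) = scaleC (a * b) x"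
    and scaleC_one: "scaleC 1 x = x"
    and scaleR_scaleC: "scaleR r x = scaleC (complex_of_real r) x"

class complex_inner = complex_vector + real_normed_vector +
  fixes cinner :: "'a \<Rightarrow> 'a \<Rightarrow> complex"
  assumes cinner_conj: "cinner x y = cnj (cinner y x)"
    and cinner_add_right: "cinner x (y + z) = cinner x y + cinner x z"
    and cinner_scaleC_right: "cinner x (scaleC c y) = c * cinner x y"
    and cinner_pos: "Im (cinner x x) = 0 \<and> 0 \<le> Re (cinner x x)"
    and cinner_eq_zero_iff: "cinner x x = 0 \<longleftrightarrow> x = 0"
    and norm_eq_sqrt_cinner: "norm x = sqrt (Re (cinner x x))"

class chilbert_space = complex_inner + complete_space

definition bounded_clinear :: "('a::complex_inner \<Rightarrow> 'b::complex_inner) \<Rightarrow> bool" where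
  "bounded_clinear T \<longleftrightarrow> bounded_linear T \<and> (\<forall>c x. T (scaleC c x) = scaleC c (T x))"

text \<open>The Hilbert space adjoint (exists and is unique for bounded operators on a Hilbert space).\<close>
definition cadjoint :: "('a::chilbert_space \<Rightarrow> 'a) \<Rightarrow> ('a \<Rightarrow> 'a)" where
  "cadjoint T = (SOME S. \<forall>x y. cinner (T x) y = cinner x (S y))"

definition cspectrum :: "('a::chilbert_space \<Rightarrow> 'a) \<Rightarrow> complex set" where
  "cspectrum T = {z. \<not> (\<exists>S. bounded_clinear S \<and>
       S \<circ> (\<lambda>x. T x - scaleC z x) = id \<and> (\<lambda>x. T x - scaleC z x) \<circ> S = id)}"

text \<open>An R*-algebra: a (not necessarily closed, not necessarily unital) *-subalgebra of B(H)
  in which every self-adjoint element has finite spectrum.\<close>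
definition rstar_algebra :: "('a::chilbert_space \<Rightarrow> 'a) set \<Rightarrow> bool" where
  "rstar_algebra A \<longleftrightarrow>
     (\<forall>T\<in>A. bounded_clinear T) \<and>
     (\<lambda>x. 0) \<in> A \<and>
     (\<forall>S\<in>A. \<forall>T\<in>A. (\<lambda>x. S x + T x) \<in> A) \<and>
     (\<forall>c. \<forall>T\<in>A. (\<lambda>x. scaleC c (T x)) \<in> A) \<and>
     (\<forall>S\<in>A. \<forall>T\<in>A. S \<circ> T \<in> A) \<and>
     (\<forall>T\<in>A. cadjoint T \<in> A) \<and>
     (\<forall>T\<in>A. cadjoint T = T \<longrightarrow> finite (cspectrum T))"

definition is_projection :: "('a::chilbert_space \<Rightarrow> 'a) \<Rightarrow> bool" where
  "is_projection p \<longleftrightarrow> p \<circ> p = p \<and> cadjoint p = p"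

definition proj_le :: "('a::chilbert_space \<Rightarrow> 'a) \<Rightarrow> ('a \<Rightarrow> 'a) \<Rightarrow> bool" where
  "proj_le p q \<longleftrightarrow> p \<circ> q = p"

definition partial_isometry :: "('a::chilbert_space \<Rightarrow> 'a) \<Rightarrow> bool" where
  "partial_isometry v \<longleftrightarrow> is_projection (cadjoint v \<circ> v)"

end

theory Submission
  imports Defs
begin



lemma scaleC_zero_left[simp]: "scaleC 0 (x::'a::complex_vector) = 0"
  using scaleR_scaleC[of 0 x] by simp

lemma cinner_add_left: "cinner (x + y) (z::'a::complex_inner) = cinner x z + cinner y z"
  by (simp only: cinner_conj[of "x+y" z] cinner_conj[of x z] cinner_conj[of y z] cinner_add_right complex_cnj_add)

lemma cinner_scaleC_left: "cinner (scaleC c x) (y::'a::complex_inner) = cnj c * cinner x y"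
  by (simp only: cinner_conj[of "scaleC c x" y] cinner_conj[of x y] cinner_scaleC_right complex_cnj_mult)

lemma cinner_zero_right[simp]: "cinner (x::'a::complex_inner) 0 = 0"
proof -
  have "cinner x (0+0) = cinner x 0 + cinner x 0" by (rule cinner_add_right)
  then show ?thesis by simp
qed

lemma cinner_zero_left[simp]: "cinner 0 (x::'a::complex_inner) = 0"
  by (simp only: cinner_conj[of 0 x] cinner_zero_right complex_cnj_zero)

lemma cinner_minus_right: "cinner (x::'a::complex_inner) (- y) = - cinner x y"
proof -
  have "cinner x (y + - y) = cinner x y + cinner x (-y)" by (rule cinner_add_right)
  then have "cinner x y + cinner x (-y) = 0" by simp
  then show ?thesis by (simp add: add_eq_0_iff)
qed

lemma cinner_diff_right: "cinner (x::'a::complex_inner) (y - z) = cinner x y - cinner x z"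
  using cinner_add_right[of x y "- z"] by (simp add: cinner_minus_right)

lemma cinner_diff_left: "cinner (x - y) (z::'a::complex_inner) = cinner x z - cinner y z"
  by (simp only: cinner_conj[of "x-y" z] cinner_conj[of x z] cinner_conj[of y z] cinner_diff_right complex_cnj_diff)

lemma cinner_scaleR_right: "cinner (x::'a::complex_inner) (scaleR r y) = of_real r * cinner x y"
  by (simp add: scaleR_scaleC cinner_scaleC_right)

lemma cinner_scaleR_left: "cinner (scaleR r x) (y::'a::complex_inner) = of_real r * cinner x y"
  by (simp add: scaleR_scaleC cinner_scaleC_left)

lemma norm_sq_cinner: "(norm (x::'a::complex_inner))^2 = Re (cinner x x)"
  using cinner_pos[of x] norm_eq_sqrt_cinner[of x] by simp

lemma cinner_self: "cinner (x::'a::complex_inner) x = complex_of_real ((norm x)^2)"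
  using cinner_pos[of x] norm_sq_cinner[of x] by (simp add: complex_eq_iff)

lemma cinner_ext: assumes "\<And>y. cinner y a = cinner y (b::'a::complex_inner)" shows "a = b"
proof -
  have "cinner (a - b) (a - b) = cinner (a - b) a - cinner (a - b) b" by (rule cinner_diff_right)
  also have "\<dots> = 0" using assms[of "a - b"] by simp
  finally have "a - b = 0" by (simp only: cinner_eq_zero_iff)
  then show ?thesis by simp
qed

lemma norm_add_sq: "(norm (a + b))^2 = (norm a)^2 + (norm b)^2 + 2 * Re (cinner a (b::'a::complex_inner))"
proof -
  have "Re (cinner b a) = Re (cinner a b)" by (subst cinner_conj) simp
  then show ?thesis by (simp add: norm_sq_cinner cinner_add_left cinner_add_right)
qed

lemma norm_diff_sq: "(norm (a - b))^2 = (norm a)^2 + (norm b)^2 - 2 * Re (cinner a (b::'a::complex_inner))"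
proof -
  have "Re (cinner b a) = Re (cinner a b)" by (subst cinner_conj) simp
  then show ?thesis by (simp add: norm_sq_cinner cinner_diff_left cinner_diff_right)
qed

lemma norm_scaleC_sq: "(norm (scaleC c (x::'a::complex_inner)))^2 = (cmod c)^2 * (norm x)^2"
proof -
  have "cinner (scaleC c x) (scaleC c x) = (cnj c * c) * cinner x x"
    by (simp add: cinner_scaleC_left cinner_scaleC_right)
  also have "cnj c * c = of_real ((cmod c)^2)" by (subst complex_norm_square) (rule mult.commute)
  finally show ?thesis by (simp add: norm_sq_cinner)
qed

lemma norm_scaleC: "norm (scaleC c (x::'a::complex_inner)) = cmod c * norm x"
proof -
  have "(norm (scaleC c x))^2 = (cmod c * norm x)^2" by (simp add: norm_scaleC_sq power_mult_distrib)
  then show ?thesis using power2_eq_iff_nonneg[of "norm (scaleC c x)" "cmod c * norm x"] by simp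
qed

lemma real_cs_aux:
  fixes A B C :: real
  assumes A: "A > 0" and H: "\<And>s. 0 \<le> s^2 * A - 2 * s * B + C"
  shows "B^2 \<le> A * C"
proof -
  have "0 \<le> (B/A)^2 * A - 2 * (B/A) * B + C" by (rule H)
  also have "(B/A)^2 * A - 2 * (B/A) * B + C = (A * C - B^2) / A"
    using A by (simp add: field_simps power2_eq_square)
  finally show ?thesis using A by (simp add: zero_le_divide_iff)
qed

lemma real_cauchy_schwarz: "Re (cinner x y) \<le> norm x * norm (y::'a::complex_inner)"
proof (cases "x = 0")
  case True then show ?thesis by simp
next
  case False
  have A: "(norm x)^2 > 0" using False by simp
  have "(Re (cinner x y))^2 \<le> (norm x)^2 * (norm y)^2"
  proof (rule real_cs_aux[OF A])
    fix s
    have "0 \<le> (norm (scaleR s x - y))^2" by simp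
    also have "\<dots> = s^2 * (norm x)^2 - 2 * s * Re (cinner x y) + (norm y)^2"
      by (simp add: norm_diff_sq power_mult_distrib cinner_scaleR_left)
    finally show "0 \<le> s^2 * (norm x)^2 - 2 * s * Re (cinner x y) + (norm y)^2" .
  qed
  then have "(Re (cinner x y))^2 \<le> (norm x * norm y)^2" by (simp add: power_mult_distrib)
  then have "\<bar>Re (cinner x y)\<bar> \<le> norm x * norm y" using abs_le_square_iff[of "Re (cinner x y)" "norm x * norm y"] by simp
  then show ?thesis by simp
qed

lemma cauchy_schwarz: "cmod (cinner x y) \<le> norm x * norm (y::'a::complex_inner)"
proof (cases "cinner x y = 0")
  case True then show ?thesis by simp
next
  case False
  define g where "g = cinner x y"
  define u where "u = cnj g / complex_of_real (cmod g)"
  have cu: "cmod u = 1" using False by (simp add: u_def g_def norm_divide)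
  have "cinner x (scaleC u y) = u * g" by (simp add: cinner_scaleC_right g_def)
  also have "u * g = complex_of_real (cmod g)"
  proof -
    have ng: "cmod g \<noteq> 0" using False by (simp add: g_def)
    have "u * g = (cnj g * g) / complex_of_real (cmod g)" by (simp add: u_def)
    also have "cnj g * g = complex_of_real ((cmod g)^2)" by (subst complex_norm_square) (rule mult.commute)
    finally show ?thesis using ng by (simp add: power2_eq_square)
  qed
  finally have "cmod g = Re (cinner x (scaleC u y))" by simp
  also have "\<dots> \<le> norm x * norm (scaleC u y)" by (rule real_cauchy_schwarz)
  also have "norm (scaleC u y) = norm y" by (simp add: norm_scaleC cu)
  finally show ?thesis by (simp add: g_def)
qed



lemma closest_point_subspace:
  fixes x0 :: "'a::chilbert_space"
  assumes cl: "closed K" and z: "0 \<in> K"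
    and addK: "\<And>a b. a \<in> K \<Longrightarrow> b \<in> K \<Longrightarrow> a + b \<in> K"
    and scK: "\<And>c a. a \<in> K \<Longrightarrow> scaleC c a \<in> K"
  shows "\<exists>k0\<in>K. \<forall>k\<in>K. norm (x0 - k0) \<le> norm (x0 - k)"
proof -
  define D where "D = (\<lambda>k. (norm (x0 - k))^2) ` K"
  define d where "d = Inf D"
  have Dne: "D \<noteq> {}" using z by (auto simp: D_def)
  have bdd: "bdd_below D" unfolding D_def by (rule bdd_belowI[of _ 0]) auto
  have low: "d \<le> (norm (x0 - k))^2" if "k \<in> K" for k
    unfolding d_def using bdd that by (auto simp: D_def intro!: cInf_lower)
  have "\<exists>k\<in>K. (norm (x0 - k))^2 < d + inverse (real (Suc n))" for n
  proof -
    have "Inf D < d + inverse (real (Suc n))" by (simp add: d_def)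
    from cInf_lessD[OF Dne this] show ?thesis by (auto simp: D_def)
  qed
  then obtain ks where ks: "\<And>n. ks n \<in> K" "\<And>n. (norm (x0 - ks n))^2 < d + inverse (real (Suc n))"
    by metis
  have par: "(norm (ks m - ks n))^2 \<le> 2 * inverse (real (Suc m)) + 2 * inverse (real (Suc n))" for m n
  proof -
    define a where "a = x0 - ks m"
    define b where "b = x0 - ks n"
    define mid where "mid = scaleR (1/2) (ks m + ks n)"
    have midK: "mid \<in> K" unfolding mid_def scaleR_scaleC using ks(1) addK scK by blast
    have "a + b = scaleR 2 (x0 - mid)" by (simp add: a_def b_def mid_def algebra_simps scaleR_2)
    then have "(norm (a + b))^2 = 4 * (norm (x0 - mid))^2" by (simp add: power_mult_distrib)
    then have ab: "(norm (a + b))^2 \<ge> 4 * d" using low[OF midK] by simp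
    have "(norm (a + b))^2 + (norm (a - b))^2 = 2 * (norm a)^2 + 2 * (norm b)^2"
      by (simp add: norm_add_sq norm_diff_sq)
    moreover have "a - b = ks n - ks m" by (simp add: a_def b_def)
    moreover have "norm (ks n - ks m) = norm (ks m - ks n)" by (rule norm_minus_commute)
    ultimately show ?thesis using ab ks(2)[of m] ks(2)[of n] by (simp add: a_def b_def)
  qed
  have "Cauchy ks"
  proof (rule metric_CauchyI)
    fix e :: real assume e: "e > 0"
    obtain M :: nat where M: "4 / e^2 < real M" using reals_Archimedean2 by blast
    have Mpos: "real M > 0" using M e by (smt (verit) divide_pos_pos zero_less_power)
    have "\<forall>m\<ge>M. \<forall>n\<ge>M. dist (ks m) (ks n) < e"
    proof (intro allI impI)
      fix m n assume mn: "m \<ge> M" "n \<ge> M"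
      have im: "inverse (real (Suc m)) \<le> inverse (real M)" using mn Mpos by (simp add: le_imp_inverse_le)
      have inn: "inverse (real (Suc n)) \<le> inverse (real M)" using mn Mpos by (simp add: le_imp_inverse_le)
      have "4 * inverse (real M) < e^2" using M e Mpos by (simp add: field_simps)
      then have "(norm (ks m - ks n))^2 < e^2" using par[of m n] im inn by linarith
      then have "norm (ks m - ks n) < e" using e by (simp add: power_less_imp_less_base)
      then show "dist (ks m) (ks n) < e" by (simp add: dist_norm)
    qed
    then show "\<exists>M. \<forall>m\<ge>M. \<forall>n\<ge>M. dist (ks m) (ks n) < e" by blast
  qed
  then obtain k0 where lim: "ks \<longlonglongrightarrow> k0" using Cauchy_convergent_iff convergent_def by blast
  have k0K: "k0 \<in> K" using closed_sequentially[OF cl] ks(1) lim by blast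
  have "(norm (x0 - k0))^2 \<le> d"
  proof (rule LIMSEQ_le)
    show "(\<lambda>n. (norm (x0 - ks n))^2) \<longlonglongrightarrow> (norm (x0 - k0))^2" by (intro tendsto_intros lim)
    show "(\<lambda>n. d + inverse (real (Suc n))) \<longlonglongrightarrow> d"
      using tendsto_add[OF tendsto_const LIMSEQ_inverse_real_of_nat, of d] by simp
    show "\<exists>N. \<forall>n\<ge>N. (norm (x0 - ks n))^2 \<le> d + inverse (real (Suc n))"
      using ks(2) less_imp_le by blast
  qed
  then have "\<forall>k\<in>K. norm (x0 - k0) \<le> norm (x0 - k)"
    using low by (meson norm_ge_zero order_trans power2_le_imp_le)
  then show ?thesis using k0K by blast
qed

lemma closest_orth:
  fixes w :: "'a::complex_inner"
  assumes scK: "\<And>c a. a \<in> K \<Longrightarrow> scaleC c a \<in> K"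
    and min: "\<And>k. k \<in> K \<Longrightarrow> norm w \<le> norm (w - k)"
    and kK: "k \<in> K"
  shows "cinner w k = 0"
proof -
  have re0: "Re (cinner w k') = 0" if k'K: "k' \<in> K" for k'
  proof (cases "k' = 0")
    case True then show ?thesis by simp
  next
    case False
    define A where "A = (norm k')^2"
    define B where "B = Re (cinner w k')"
    have A: "A > 0" using False by (simp add: A_def)
    define s where "s = B / A"
    have "scaleR s k' \<in> K" unfolding scaleR_scaleC using scK k'K by blast
    then have "norm w \<le> norm (w - scaleR s k')" by (rule min)
    then have "(norm w)^2 \<le> (norm (w - scaleR s k'))^2" by simp
    also have "\<dots> = (norm w)^2 + s^2 * A - 2 * s * B"
      by (simp add: norm_diff_sq cinner_scaleR_right A_def B_def power_mult_distrib)
    finally have "0 \<le> s^2 * A - 2 * s * B" by simp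
    also have "s^2 * A - 2 * s * B = - (B^2 / A)" using A by (simp add: s_def field_simps power2_eq_square)
    finally have "B^2 / A \<le> 0" by simp
    then have "B^2 \<le> 0" using A by (simp add: divide_le_0_iff)
    then show ?thesis unfolding B_def by simp
  qed
  have "Re (cinner w k) = 0" using re0 kK by blast
  moreover have "Re (cinner w (scaleC \<i> k)) = 0" using re0 scK kK by blast
  then have "Im (cinner w k) = 0" by (simp add: cinner_scaleC_right)
  ultimately show ?thesis by (simp add: complex_eq_iff)
qed

lemma riesz:
  fixes f :: "'a::chilbert_space \<Rightarrow> complex"
  assumes add: "\<And>x y. f (x + y) = f x + f y"
    and sc: "\<And>c x. f (scaleC c x) = c * f x"
    and bnd: "\<And>x. norm (f x) \<le> norm x * K"
  shows "\<exists>z. \<forall>x. f x = cinner z x"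
proof (cases "\<forall>x. f x = 0")
  case True then show ?thesis by (intro exI[of _ 0]) simp
next
  case False
  then obtain x0 where fx0: "f x0 \<noteq> 0" by blast
  have bl: "bounded_linear f"
  proof (rule bounded_linear_intro[OF add])
    show "f (scaleR r x) = scaleR r (f x)" for r x
      by (simp add: scaleR_scaleC sc scaleR_conv_of_real)
    show "norm (f x) \<le> norm x * K" for x by (rule bnd)
  qed
  have f0: "f 0 = 0" using sc[of 0 0] by simp
  have fdiff: "f (a - b) = f a - f b" for a b using add[of "a - b" b] by simp
  define Kr where "Kr = {x. f x = 0}"
  have cl: "closed Kr" unfolding Kr_def
    by (rule closed_Collect_eq) (auto intro: linear_continuous_on bl)
  obtain k0 where k0: "k0 \<in> Kr" "\<And>k. k \<in> Kr \<Longrightarrow> norm (x0 - k0) \<le> norm (x0 - k)"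
    using closest_point_subspace[OF cl, of x0] f0 add sc unfolding Kr_def by auto
  define w where "w = x0 - k0"
  have fw: "f w = f x0" using k0(1) by (simp add: w_def fdiff Kr_def)
  have wnz: "w \<noteq> 0" using fw fx0 f0 by auto
  have min: "norm w \<le> norm (w - k)" if "k \<in> Kr" for k
  proof -
    have "k0 + k \<in> Kr" using k0(1) that add by (simp add: Kr_def)
    then have "norm (x0 - k0) \<le> norm (x0 - (k0 + k))" by (rule k0(2))
    then show ?thesis by (simp add: w_def algebra_simps)
  qed
  have orth: "cinner w k = 0" if "k \<in> Kr" for k
    using closest_orth[of Kr w k] min that sc by (auto simp: Kr_def)
  have ww: "cinner w w \<noteq> 0" using wnz cinner_eq_zero_iff by blast
  show ?thesis
  proof (intro exI allI)
    fix x
    define u where "u = x - scaleC (f x / f w) w"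
    have "f u = 0" using fx0 fw by (simp add: u_def fdiff sc)
    then have "cinner w u = 0" using orth by (simp add: Kr_def)
    then have "cinner w x = (f x / f w) * cinner w w"
      by (simp add: u_def cinner_diff_right cinner_scaleC_right)
    then show "f x = cinner (scaleC (cnj (f w / cinner w w)) w) x"
      using ww fx0 fw by (simp add: cinner_scaleC_left field_simps)
  qed
qed

lemma adjoint_exists:
  fixes T :: "'a::chilbert_space \<Rightarrow> 'a"
  assumes "bounded_clinear T"
  shows "cinner (T x) y = cinner x (cadjoint T y)"
proof -
  have bl: "bounded_linear T" and sc: "\<And>c x. T (scaleC c x) = scaleC c (T x)"
    using assms by (auto simp: bounded_clinear_def)
  obtain K where K: "\<And>x. norm (T x) \<le> norm x * K" using bounded_linear.bounded[OF bl] by blast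
  have "\<forall>y. \<exists>z. \<forall>x. cinner y (T x) = cinner z x"
  proof
    fix y
    show "\<exists>z. \<forall>x. cinner y (T x) = cinner z x"
    proof (rule riesz)
      show "cinner y (T (a + b)) = cinner y (T a) + cinner y (T b)" for a b
        by (simp add: linear_add[OF bounded_linear.linear[OF bl]] cinner_add_right)
      show "cinner y (T (scaleC c a)) = c * cinner y (T a)" for c a
        by (simp add: sc cinner_scaleC_right)
      show "norm (cinner y (T a)) \<le> norm a * (norm y * K)" for a
      proof -
        have "norm (cinner y (T a)) \<le> norm y * norm (T a)" by (rule cauchy_schwarz)
        also have "\<dots> \<le> norm y * (norm a * K)" by (rule mult_left_mono[OF K]) simp
        finally show ?thesis by (simp add: algebra_simps)
      qed
    qed
  qed
  then obtain S where S: "\<And>y x. cinner y (T x) = cinner (S y) x" by metis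
  have "\<forall>x y. cinner (T x) y = cinner x (S y)"
    by (metis S cinner_conj)
  then have "\<exists>S. \<forall>x y. cinner (T x) y = cinner x (S y)" by blast
  from someI_ex[OF this] show ?thesis unfolding cadjoint_def by blast
qed

lemma cadjoint_eqI:
  fixes T :: "'a::chilbert_space \<Rightarrow> 'a"
  assumes "\<And>x y. cinner (T x) y = cinner x (S y)"
  shows "cadjoint T = S"
proof -
  have "\<exists>S. \<forall>x y. cinner (T x) y = cinner x (S y)" using assms by blast
  from someI_ex[OF this] have C: "\<And>x y. cinner (T x) y = cinner x (cadjoint T y)"
    unfolding cadjoint_def by blast
  show ?thesis
  proof
    fix y show "cadjoint T y = S y"
      by (rule cinner_ext) (metis C assms)
  qed
qed



lemma scaleC_zero_right[simp]: "scaleC c (0::'a::complex_vector) = 0"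
proof -
  have "scaleC c (0 + 0) = scaleC c (0::'a) + scaleC c 0" by (rule scaleC_add_right)
  then show ?thesis by simp
qed

lemma cinner_sum_right: "cinner (x::'a::complex_inner) (sum f S) = (\<Sum>k\<in>S. cinner x (f k))"
proof (induction S rule: infinite_finite_induct)
  case (insert a F) then show ?case by (simp add: cinner_add_right)
qed simp_all

lemma cinner_sum_left: "cinner (sum f S) (x::'a::complex_inner) = (\<Sum>k\<in>S. cinner (f k) x)"
proof (induction S rule: infinite_finite_induct)
  case (insert a F) then show ?case by (simp add: cinner_add_left)
qed simp_all

lemma bessel:
  fixes e :: "nat \<Rightarrow> 'a::complex_inner"
  assumes on: "\<And>j k. cinner (e j) (e k) = (if j = k then 1 else 0)"
  shows "(\<Sum>k<n. (cmod (cinner (e k) y))^2) \<le> (norm y)^2"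
proof -
  define t where "t k = cinner (e k) y" for k
  define s where "s = (\<Sum>k<n. scaleC (t k) (e k))"
  define w where "w = y - s"
  have es: "cinner (e j) s = t j" if "j < n" for j
  proof -
    have "cinner (e j) s = (\<Sum>k<n. t k * cinner (e j) (e k))"
      by (simp add: s_def cinner_sum_right cinner_scaleC_right)
    also have "\<dots> = (\<Sum>k<n. if k = j then t k else 0)"
      by (rule sum.cong) (auto simp: on)
    also have "\<dots> = t j" using that by simp
    finally show ?thesis .
  qed
  have ew: "cinner (e j) w = 0" if "j < n" for j
    using es[OF that] by (simp add: w_def cinner_diff_right t_def)
  have sw: "cinner s w = 0"
    by (simp add: s_def cinner_sum_left cinner_scaleC_left ew)
  have ws: "cinner w s = 0" using sw by (subst cinner_conj) simp
  have ss: "cinner s s = (\<Sum>k<n. cnj (t k) * t k)"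
    by (simp add: s_def[of] cinner_sum_left cinner_scaleC_left es[unfolded s_def])
  have "Re (cinner s s) = (\<Sum>k<n. (cmod (t k))^2)"
  proof -
    have "Re (cinner s s) = (\<Sum>k<n. Re (cnj (t k) * t k))" by (simp add: ss)
    also have "\<dots> = (\<Sum>k<n. (cmod (t k))^2)"
    proof (rule sum.cong)
      fix k
      have "cnj (t k) * t k = complex_of_real ((cmod (t k))^2)"
        by (subst complex_norm_square) (rule mult.commute)
      then show "Re (cnj (t k) * t k) = (cmod (t k))^2" by (simp only: Re_complex_of_real)
    qed simp
    finally show ?thesis .
  qed
  then have ns: "(norm s)^2 = (\<Sum>k<n. (cmod (t k))^2)" by (simp add: norm_sq_cinner)
  have "y = w + s" by (simp add: w_def)
  then have "(norm y)^2 = (norm w)^2 + (norm s)^2 + 2 * Re (cinner w s)"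
    using norm_add_sq[of w s] by simp
  then have "(norm s)^2 \<le> (norm y)^2" using ws by simp
  then show ?thesis using ns by (simp add: t_def)
qed

lemma rab_bound:
  fixes r a b :: real
  assumes "\<bar>r\<bar> \<le> 1"
  shows "\<bar>r * a * b\<bar> \<le> (a^2 + b^2) / 2"
proof -
  have "0 \<le> (\<bar>a\<bar> - \<bar>b\<bar>)^2" by simp
  then have 1: "2 * (\<bar>a\<bar> * \<bar>b\<bar>) \<le> a^2 + b^2" by (simp add: power2_diff)
  have "\<bar>r * a * b\<bar> = \<bar>r\<bar> * (\<bar>a\<bar> * \<bar>b\<bar>)" by (simp add: abs_mult)
  also have "\<dots> \<le> 1 * (\<bar>a\<bar> * \<bar>b\<bar>)" by (rule mult_right_mono[OF assms]) simp
  finally show ?thesis using 1 by simp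
qed

lemma bcl_add: "bounded_clinear T \<Longrightarrow> T (a + b) = T a + T b"
  unfolding bounded_clinear_def by (simp add: linear_add bounded_linear.linear)

lemma bcl_diff: "bounded_clinear T \<Longrightarrow> T (a - b) = T a - T b"
  unfolding bounded_clinear_def by (simp add: linear_diff bounded_linear.linear)

lemma bcl_zero: "bounded_clinear T \<Longrightarrow> T 0 = 0"
  unfolding bounded_clinear_def by (simp add: linear_0 bounded_linear.linear)

lemma bcl_scaleC: "bounded_clinear T \<Longrightarrow> T (scaleC c a) = scaleC c (T a)"
  unfolding bounded_clinear_def by simp



lemma lin_aux1: "\<bar>t\<bar> \<le> (s::real) / 2 \<Longrightarrow> s / 2 \<le> s - t"
  by (simp add: abs_le_iff)

lemma lin_aux2: "\<bar>t\<bar> \<le> (s::real) / 2 \<Longrightarrow> s - t \<le> s + s / 2"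
  by (simp add: abs_le_iff)

lemma lin_aux3: "(s::real) / 2 \<le> q \<Longrightarrow> 0 < s \<Longrightarrow> 0 < q"
  by simp

lemma lin_aux4: "q \<le> s + s / 2 \<Longrightarrow> 0 < q \<Longrightarrow> q / 2 \<le> (s::real)"
  by simp

lemma lin_aux5: "x < y \<Longrightarrow> y \<le> z \<Longrightarrow> z \<le> (x::real) \<Longrightarrow> False"
  by simp

theorem proposition6p1:
  fixes A :: "('a::chilbert_space \<Rightarrow> 'a) set" and v :: "'a \<Rightarrow> 'a"
  assumes "rstar_algebra A"
    and "v \<in> A"
    and "partial_isometry v"
    and "proj_le (v \<circ> cadjoint v) (cadjoint v \<circ> v)"
  shows "v \<circ> cadjoint v = cadjoint v \<circ> v"
proof (rule ccontr)
  assume neq: "v \<circ> cadjoint v \<noteq> cadjoint v \<circ> v"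
  define vs where "vs = cadjoint v"
  have bv: "bounded_clinear v" using assms(1,2) by (simp add: rstar_algebra_def)
  have vsA: "vs \<in> A" using assms(1,2) by (simp add: rstar_algebra_def vs_def)
  have bvs: "bounded_clinear vs" using assms(1) vsA by (simp add: rstar_algebra_def)
  define h where "h = (\<lambda>x. v x + vs x)"
  have hA: "h \<in> A" using assms(1,2) vsA by (simp add: rstar_algebra_def h_def)
  have fin: "\<And>T. T \<in> A \<Longrightarrow> cadjoint T = T \<Longrightarrow> finite (cspectrum T)"
    using assms(1) by (simp add: rstar_algebra_def)
  have adj: "\<And>x y. cinner (v x) y = cinner x (vs y)"
    unfolding vs_def by (rule adjoint_exists[OF bv])
  have adj2: "\<And>x y. cinner (vs x) y = cinner x (v y)"
  proof -
    fix x y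
    have "cinner (vs x) y = cnj (cinner y (vs x))" by (rule cinner_conj)
    also have "\<dots> = cnj (cinner (v y) x)" by (simp only: adj)
    also have "\<dots> = cinner x (v y)" by (simp only: cinner_conj[of x "v y"])
    finally show "cinner (vs x) y = cinner x (v y)" .
  qed
  have pp: "\<And>x. vs (v (vs (v x))) = vs (v x)"
    using assms(3) unfolding partial_isometry_def is_projection_def vs_def
    by (metis comp_apply)
  have qp: "\<And>x. v (vs (vs (v x))) = v (vs x)"
    using assms(4) unfolding proj_le_def vs_def by (metis comp_apply)
  have S1: "\<And>x. v (vs (v x)) = v x"
  proof -
    fix x
    define d where "d = x - vs (v x)"
    have "vs (v d) = 0" by (simp add: d_def bcl_diff[OF bv] bcl_diff[OF bvs] pp)
    then have "cinner (v d) (v d) = 0" by (simp add: adj)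
    then have "v d = 0" by (simp only: cinner_eq_zero_iff)
    then show "v (vs (v x)) = v x" by (simp add: d_def bcl_diff[OF bv])
  qed
  have S3: "\<And>x. vs (v (v (vs x))) = v (vs x)"
  proof -
    fix x
    show "vs (v (v (vs x))) = v (vs x)"
    proof (rule cinner_ext)
      fix y
      have "cinner y (vs (v (v (vs x)))) = cinner (v y) (v (v (vs x)))" by (simp only: adj)
      also have "\<dots> = cinner (vs (v y)) (v (vs x))" by (simp only: adj2)
      also have "\<dots> = cinner (vs (vs (v y))) (vs x)" by (simp only: adj2)
      also have "\<dots> = cinner (v (vs (vs (v y)))) x" by (simp only: adj)
      also have "\<dots> = cinner (v (vs y)) x" by (simp only: qp)
      also have "\<dots> = cinner (vs y) (vs x)" by (simp only: adj)
      also have "\<dots> = cinner y (v (vs x))" by (simp only: adj2)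
      finally show "cinner y (vs (v (v (vs x)))) = cinner y (v (vs x))" .
    qed
  qed
  have S5: "\<And>x. vs (v (v x)) = v x"
    using S3 S1 by metis
  obtain x0 where x0: "v (vs x0) \<noteq> vs (v x0)"
    using neq unfolding vs_def by (metis comp_apply ext)
  define \<xi>0 where "\<xi>0 = vs (v x0) - v (vs x0)"
  have p\<xi>0: "vs (v \<xi>0) = \<xi>0"
    by (simp add: \<xi>0_def bcl_diff[OF bv] bcl_diff[OF bvs] pp S3)
  have q\<xi>0: "v (vs \<xi>0) = 0"
    by (simp add: \<xi>0_def bcl_diff[OF bv] bcl_diff[OF bvs] qp S1)
  have nz: "\<xi>0 \<noteq> 0" using x0 by (simp add: \<xi>0_def)
  define \<xi> where "\<xi> = scaleC (complex_of_real (1 / norm \<xi>0)) \<xi>0"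
  have p\<xi>: "vs (v \<xi>) = \<xi>" by (simp add: \<xi>_def bcl_scaleC[OF bv] bcl_scaleC[OF bvs] p\<xi>0)
  have q\<xi>: "v (vs \<xi>) = 0" by (simp add: \<xi>_def bcl_scaleC[OF bv] bcl_scaleC[OF bvs] q\<xi>0)
  have vs\<xi>: "vs \<xi> = 0"
  proof -
    have "cinner (vs \<xi>) (vs \<xi>) = cinner \<xi> (v (vs \<xi>))" by (rule adj2)
    also have "\<dots> = 0" by (simp add: q\<xi>)
    finally show ?thesis by (simp only: cinner_eq_zero_iff)
  qed
  have n\<xi>: "norm \<xi> = 1" using nz by (simp add: \<xi>_def norm_scaleC norm_divide)
  have c\<xi>: "cinner \<xi> \<xi> = 1" by (simp add: cinner_self n\<xi>)
  define e where "e k = (v ^^ k) \<xi>" for k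
  have e0: "e 0 = \<xi>" by (simp add: e_def)
  have eS: "\<And>k. e (Suc k) = v (e k)" by (simp add: e_def)
  have E1: "\<And>k. vs (v (e k)) = e k"
  proof -
    fix k show "vs (v (e k)) = e k"
      by (cases k) (simp_all add: e0 eS p\<xi> S5)
  qed
  have E3: "\<And>j k. cinner (e j) (e k) = (if j = k then 1 else 0)"
  proof -
    fix j
    show "\<And>k. cinner (e j) (e k) = (if j = k then 1 else 0)"
    proof (induction j)
      case 0
      show ?case
      proof (cases k)
        case 0 then show ?thesis by (simp add: e0 c\<xi>)
      next
        case (Suc k')
        have "cinner (e 0) (e k) = cinner (vs \<xi>) (e k')" by (simp add: Suc eS e0 adj2)
        then show ?thesis using Suc by (simp add: vs\<xi>)
      qed
    next
      case (Suc j)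
      show ?case
      proof (cases k)
        case 0
        have "cinner (e (Suc j)) (e k) = cinner (e j) (vs \<xi>)" by (simp add: 0 eS e0 adj)
        then show ?thesis using 0 by (simp add: vs\<xi>)
      next
        case (Suc k')
        have "cinner (e (Suc j)) (e k) = cinner (e j) (vs (v (e k')))" by (simp add: Suc eS adj)
        also have "\<dots> = cinner (e j) (e k')" by (simp add: E1)
        finally show ?thesis using Suc.IH[of k'] \<open>k = Suc k'\<close> by simp
      qed
    qed
  qed
  have hadj: "\<And>a b. cinner (h a) b = cinner a (h b)"
    by (simp add: h_def cinner_add_left cinner_add_right adj adj2 add.commute)
  have hsa: "cadjoint h = h" by (rule cadjoint_eqI) (rule hadj)
  have finh: "finite (cspectrum h)" by (rule fin[OF hA hsa])
  have he0: "h (e 0) = e (Suc 0)" by (simp add: h_def e0 eS vs\<xi>)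
  have heS: "\<And>k. h (e (Suc k)) = e (Suc (Suc k)) + e k" by (simp add: h_def eS E1)
  have key: "complex_of_real r \<in> cspectrum h" if r: "\<bar>r\<bar> < 1" for r
    unfolding cspectrum_def mem_Collect_eq
  proof
    assume "\<exists>S. bounded_clinear S \<and> S \<circ> (\<lambda>x. h x - scaleC (complex_of_real r) x) = id \<and>
               (\<lambda>x. h x - scaleC (complex_of_real r) x) \<circ> S = id"
    then obtain S where S: "(\<lambda>x. h x - scaleC (complex_of_real r) x) \<circ> S = id" by blast
    define y where "y = S \<xi>"
    have hy: "h y - scaleC (complex_of_real r) y = \<xi>"
      using fun_cong[OF S, of \<xi>] by (simp add: y_def)
    define a where "a k = Re (cinner (e k) y)" for k
    have eqk: "cinner (h (e k)) y - complex_of_real r * cinner (e k) y = (if k = 0 then 1 else 0)" for k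
    proof -
      have "cinner (e k) \<xi> = cinner (e k) (h y) - complex_of_real r * cinner (e k) y"
        by (simp add: hy[symmetric] cinner_diff_right cinner_scaleC_right)
      also have "cinner (e k) (h y) = cinner (h (e k)) y" by (simp add: hadj)
      finally show ?thesis by (simp add: e0[symmetric] E3)
    qed
    have rec0: "a (Suc 0) - r * a 0 = 1"
    proof -
      have "Re (cinner (h (e 0)) y - complex_of_real r * cinner (e 0) y) = 1" using eqk[of 0] by simp
      then show ?thesis by (simp add: he0 a_def)
    qed
    have recS: "a (Suc (Suc k)) = r * a (Suc k) - a k" for k
    proof -
      have "Re (cinner (h (e (Suc k))) y - complex_of_real r * cinner (e (Suc k)) y) = 0"
        using eqk[of "Suc k"] by simp
      then show ?thesis by (simp add: heS a_def cinner_add_left)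
    qed
    define Q where "Q k = (a k)^2 + (a (Suc k))^2 - r * a k * a (Suc k)" for k
    have QS: "Q (Suc k) = Q k" for k
      unfolding Q_def recS by (simp add: algebra_simps power2_eq_square)
    have Qc: "Q k = Q 0" for k by (induction k) (simp_all add: QS)
    have r1: "\<bar>r\<bar> \<le> 1" using r by simp
    have Q0: "Q 0 \<ge> ((a 0)^2 + (a (Suc 0))^2) / 2"
      using lin_aux1[OF rab_bound[OF r1, of "a 0" "a (Suc 0)"]] unfolding Q_def by simp
    have nz01: "(a 0)^2 + (a (Suc 0))^2 > 0"
    proof (rule ccontr)
      assume "\<not> ?thesis"
      then have "a 0 = 0" "a (Suc 0) = 0"
        by (smt (verit) zero_le_power2 power2_less_eq_zero_iff)+
      then show False using rec0 by simp
    qed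
    have Qpos: "Q 0 > 0" using lin_aux3[OF Q0 nz01] .
    have low: "(a k)^2 + (a (Suc k))^2 \<ge> Q 0 / 2" for k
    proof -
      have "Q k \<le> (a k)^2 + (a (Suc k))^2 + ((a k)^2 + (a (Suc k))^2) / 2"
        using lin_aux2[OF rab_bound[OF r1, of "a k" "a (Suc k)"]] unfolding Q_def by simp
      then have "Q 0 \<le> (a k)^2 + (a (Suc k))^2 + ((a k)^2 + (a (Suc k))^2) / 2" using Qc[of k] by simp
      from lin_aux4[OF this Qpos] show ?thesis .
    qed
    have sumlow: "(\<Sum>k<2*N. (a k)^2) \<ge> real N * (Q 0 / 2)" for N
    proof (induction N)
      case 0 then show ?case by simp
    next
      case (Suc N)
      have "2 * Suc N = Suc (Suc (2 * N))" by simp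
      then have "(\<Sum>k<2 * Suc N. (a k)^2) = (\<Sum>k<2*N. (a k)^2) + (a (2*N))^2 + (a (Suc (2*N)))^2"
        by simp
      then show ?case using Suc.IH low[of "2*N"] by (simp add: algebra_simps)
    qed
    have bes: "(\<Sum>k<n. (a k)^2) \<le> (norm y)^2" for n
    proof -
      have "(\<Sum>k<n. (a k)^2) \<le> (\<Sum>k<n. (cmod (cinner (e k) y))^2)"
      proof (rule sum_mono)
        fix k
        have "\<bar>a k\<bar> \<le> cmod (cinner (e k) y)" unfolding a_def by (rule abs_Re_le_cmod)
        then show "(a k)^2 \<le> (cmod (cinner (e k) y))^2"
          by (metis abs_ge_zero power2_abs power_mono)
      qed
      also have "\<dots> \<le> (norm y)^2" by (rule bessel[OF E3])
      finally show ?thesis .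
    qed
    obtain N :: nat where N: "2 * (norm y)^2 / Q 0 < real N" using reals_Archimedean2 by blast
    have "(norm y)^2 < real N * (Q 0 / 2)" using N Qpos by (simp add: field_simps)
    then show False using lin_aux5 sumlow[of N] bes[of "2*N"] by blast
  qed
  have "complex_of_real ` {-1<..<1} \<subseteq> cspectrum h" using key by auto
  moreover have "infinite (complex_of_real ` {-1<..<(1::real)})"
  proof
    assume "finite (complex_of_real ` {-1<..<(1::real)})"
    then have "finite {-1<..<(1::real)}" using finite_imageD inj_of_real inj_on_subset by blast
    then show False using infinite_Ioo[of "-1" "1::real"] by simp
  qed
  ultimately show False using finh finite_subset by blast
qed

end
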